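(* For every $E\ge0$, $$S^+(E)=\frac12\sup_{(y,m)\in D(E)}F(y,m).$$
   Context: Let $0<\rho_-<\rho_+<1$, $\varphi_\pm=\log\frac{\rho_\pm}{1-\rho_\pm}$, $s(\theta)=\theta\log\theta+(1-\theta)\log(1-\theta)$ on $[0,1]$, $\chi(\rho)=\rho(1-\rho)$. $\mathcal M$ is the set of measurable $\rho:[-1,1]\to[0,1]$, $\mathbb S(\rho)=-\frac12\int_{-1}^1 s(\rho(x))dx$, $\mathcal H(\rho,\varphi)=\frac12\int_{-1}^1[(1-\rho)\varphi-\log(1+e^\varphi)]dx$, $\Phi=\{\varphi_-\mathbf 1_{[-1,y)}+\varphi_+\mathbf 1_{[y,1]}:y\in[-1,1]\}$, $\bar V^+=\log(\min_{\rho\in[\rho_-,\rho_+]}\chi(\rho))$, $V^+(\rho)=-\mathbb S(\rho)+\inf_{\varphi\in\Phi}\mathcal H(\rho,\varphi)-\bar V^+$, and $S^+(E)=\sup\{\mathbb S(\rho):\rho\in\mathcal M,\ V^+(\rho)+\mathbb S(\rho)=E\}$ (sup of empty set $=-\infty$). Let $\xi_0=\frac{\log(1+e^{\varphi_+})-\log(1+e^{\varphi_-})}{\varphi_+-\varphi_-}\in(0,1)$, $\hat\xi_0=\frac{\log(1+e^{\varphi_+})+\log(1+e^{\varphi_-})}{\varphi_+-\varphi_-}$, and $E(m)=\frac{\varphi_+m-2\bar V^+-2E}{\varphi_+-\varphi_-}-\hat\xi_0$. Let $D(E)\subset\mathbb R^2$ be the set of $(y,m)$ with $-1\le y\le1$,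 $0\le m\le2$, $\max\{\xi_0,m-\xi_0\}\le E(m)\le m-(m-1)\xi_0$, $0\le y\xi_0+E(m)\le y+1$ and $0\le m-(y\xi_0+E(m))\le1-y$. On $D(E)$ let $F(y,m)=-(y+1)\,s\big(\frac{y\xi_0+E(m)}{y+1}\big)-(1-y)\,s\big(\frac{m-(y\xi_0+E(m))}{1-y}\big)$, where for $y=\pm1$ the indeterminate term is set equal to $0$; the supremum over the empty set is $-\infty$. *)

theory Defs
  imports "HOL-Analysis.Analysis"
begin

(* Parameters rm = rho_-, rp = rho_+ are passed explicitly. log = natural log ln. *)

definition phi_of :: "real \<Rightarrow> real" where
  "phi_of r = ln (r / (1 - r))"

definition sfun :: "real \<Rightarrow> real" where
  "sfun \<theta> = \<theta> * ln \<theta> + (1 - \<theta>) * ln (1 - \<theta>)"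

definition chi :: "real \<Rightarrow> real" where
  "chi r = r * (1 - r)"

definition Mset :: "(real \<Rightarrow> real) set" where
  "Mset = {\<rho>. \<rho> \<in> borel_measurable (lebesgue_on {-1..1}) \<and> (\<forall>x\<in>{-1..1}. 0 \<le> \<rho> x \<and> \<rho> x \<le> 1)}"

definition SS :: "(real \<Rightarrow> real) \<Rightarrow> real" where
  "SS \<rho> = - (1/2) * integral\<^sup>L (lebesgue_on {-1..1}) (\<lambda>x. sfun (\<rho> x))"

definition HH :: "(real \<Rightarrow> real) \<Rightarrow> (real \<Rightarrow> real) \<Rightarrow> real" where
  "HH \<rho> \<phi> = (1/2) * integral\<^sup>L (lebesgue_on {-1..1})
      (\<lambda>x. (1 - \<rho> x) * \<phi> x - ln (1 + exp (\<phi> x)))"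

definition step_phi :: "real \<Rightarrow> real \<Rightarrow> real \<Rightarrow> real \<Rightarrow> real" where
  "step_phi rm rp y x = (if x < y then phi_of rm else phi_of rp)"

definition PhiSet :: "real \<Rightarrow> real \<Rightarrow> (real \<Rightarrow> real) set" where
  "PhiSet rm rp = {step_phi rm rp y | y. y \<in> {-1..1}}"

definition Vbar :: "real \<Rightarrow> real \<Rightarrow> real" where
  "Vbar rm rp = ln (INF r\<in>{rm..rp}. chi r)"

definition Vplus :: "real \<Rightarrow> real \<Rightarrow> (real \<Rightarrow> real) \<Rightarrow> real" where
  "Vplus rm rp \<rho> = - SS \<rho> + (INF \<phi>\<in>PhiSet rm rp. HH \<rho> \<phi>) - Vbar rm rp"

definition Splus :: "real \<Rightarrow> real \<Rightarrow> real \<Rightarrow> ereal" where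
  "Splus rm rp E = Sup (ereal ` {SS \<rho> | \<rho>. \<rho> \<in> Mset \<and> Vplus rm rp \<rho> + SS \<rho> = E})"

definition xi0 :: "real \<Rightarrow> real \<Rightarrow> real" where
  "xi0 rm rp = (ln (1 + exp (phi_of rp)) - ln (1 + exp (phi_of rm))) / (phi_of rp - phi_of rm)"

definition xihat0 :: "real \<Rightarrow> real \<Rightarrow> real" where
  "xihat0 rm rp = (ln (1 + exp (phi_of rp)) + ln (1 + exp (phi_of rm))) / (phi_of rp - phi_of rm)"

definition Em :: "real \<Rightarrow> real \<Rightarrow> real \<Rightarrow> real \<Rightarrow> real" where
  "Em rm rp E m = (phi_of rp * m - 2 * Vbar rm rp - 2 * E) / (phi_of rp - phi_of rm) - xihat0 rm rp"

definition Dset :: "real \<Rightarrow> real \<Rightarrow> real \<Rightarrow> (real \<times> real) set" where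
  "Dset rm rp E = {(y, m). -1 \<le> y \<and> y \<le> 1 \<and> 0 \<le> m \<and> m \<le> 2 \<and>
      max (xi0 rm rp) (m - xi0 rm rp) \<le> Em rm rp E m \<and>
      Em rm rp E m \<le> m - (m - 1) * xi0 rm rp \<and>
      0 \<le> y * xi0 rm rp + Em rm rp E m \<and> y * xi0 rm rp + Em rm rp E m \<le> y + 1 \<and>
      0 \<le> m - (y * xi0 rm rp + Em rm rp E m) \<and> m - (y * xi0 rm rp + Em rm rp E m) \<le> 1 - y}"

text \<open>F(y,m); for y = -1 (resp. y = 1) the indeterminate first (resp. second) term is 0.\<close>
definition Ffun :: "real \<Rightarrow> real \<Rightarrow> real \<Rightarrow> real \<Rightarrow> real \<Rightarrow> real" where
  "Ffun rm rp E y m =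
     (let a = y * xi0 rm rp + Em rm rp E m in
      (if y = -1 then 0 else - (y + 1) * sfun (a / (y + 1))) +
      (if y = 1 then 0 else - (1 - y) * sfun ((m - a) / (1 - y))))"

end

theory Submission
  imports Defs
begin

lemma sfun_sym: "sfun (1 - t) = sfun t"
  unfolding sfun_def by simp

lemma xlog_tangent:
  fixes t c :: real
  assumes "0 \<le> t" "0 < c"
  shows "t * ln c \<le> t * ln t + (c - t)"
proof (cases "t = 0")
  case True then show ?thesis using assms by simp
next
  case False
  then have tp: "0 < t" using assms by simp
  have "ln (c / t) \<le> c / t - 1" using ln_le_minus_one[of "c/t"] tp assms by simp
  then have "ln c - ln t \<le> c / t - 1" using ln_div[of c t] tp assms by simp
  then have "t * (ln c - ln t) \<le> t * (c / t - 1)" using tp by (simp add: mult_left_mono)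
  then show ?thesis using tp by (simp add: algebra_simps)
qed

lemma sfun_tangent:
  fixes t c :: real
  assumes "0 \<le> t" "t \<le> 1" "0 < c" "c < 1"
  shows "t * ln c + (1 - t) * ln (1 - c) \<le> sfun t"
  using xlog_tangent[of t c] xlog_tangent[of "1-t" "1-c"] assms unfolding sfun_def by simp

lemma limit_nonneg:
  fixes L X :: real
  assumes L: "0 < L" and h: "\<And>c. 0 < c \<Longrightarrow> c < 1 \<Longrightarrow> L * ln (1 - c) \<le> X"
  shows "0 \<le> X"
proof (rule ccontr)
  assume "\<not> 0 \<le> X"
  then have X: "X < 0" by simp
  define c where "c = 1 - exp (X / (2*L))"
  have e: "exp (X / (2*L)) < 1" using X L by (simp add: divide_neg_pos)
  have "0 < c" "c < 1" using e by (auto simp: c_def)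
  then have "L * ln (1 - c) \<le> X" by (rule h)
  moreover have "L * ln (1 - c) = X / 2" using L by (simp add: c_def)
  ultimately show False using X by simp
qed

lemma jensen:
  fixes h :: "real \<Rightarrow> real"
  assumes hi: "h integrable_on {a..b}" and si: "(\<lambda>x. sfun (h x)) integrable_on {a..b}"
    and h01: "\<And>x. x \<in> {a..b} \<Longrightarrow> 0 \<le> h x \<and> h x \<le> 1" and ab: "a \<le> b"
  shows "(b - a) * sfun (integral {a..b} h / (b - a)) \<le> integral {a..b} (\<lambda>x. sfun (h x))"
proof (cases "a = b")
  case True then show ?thesis by simp
next
  case False
  define L where "L = b - a"
  define I where "I = integral {a..b} h"
  define S where "S = integral {a..b} (\<lambda>x. sfun (h x))"
  have L: "0 < L" using ab False by (simp add: L_def)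
  have I0: "0 \<le> I" unfolding I_def by (rule integral_nonneg[OF hi]) (use h01 in auto)
  have "I \<le> integral {a..b} (\<lambda>x. 1::real)" unfolding I_def
    by (rule integral_le[OF hi]) (use h01 in auto)
  then have IL: "I \<le> L" using ab by (simp add: L_def)
  have key: "I * ln c + (L - I) * ln (1 - c) \<le> S" if c: "0 < c" "c < 1" for c
  proof -
    have "integral {a..b} (\<lambda>x. h x * (ln c - ln (1-c)) + ln (1-c)) = I * (ln c - ln (1-c)) + L * ln (1-c)"
      using hi ab by (subst integral_add) (auto intro: integrable_on_mult_left simp: I_def L_def)
    moreover have "integral {a..b} (\<lambda>x. h x * (ln c - ln (1-c)) + ln (1-c)) \<le> S"
      unfolding S_def
    proof (rule integral_le)
      show "(\<lambda>x. h x * (ln c - ln (1 - c)) + ln (1 - c)) integrable_on {a..b}"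
        using hi by (intro integrable_add integrable_on_mult_left) auto
      show "(\<lambda>x. sfun (h x)) integrable_on {a..b}" by (rule si)
      fix x assume "x \<in> {a..b}"
      then show "h x * (ln c - ln (1 - c)) + ln (1 - c) \<le> sfun (h x)"
        using sfun_tangent[of "h x" c] h01 c by (simp add: algebra_simps)
    qed
    ultimately show ?thesis by (simp add: algebra_simps)
  qed
  have "L * sfun (I / L) \<le> S"
  proof (cases "I = 0")
    case True
    have "0 \<le> S" by (rule limit_nonneg[OF L]) (use key True in auto)
    then show ?thesis using True by (simp add: sfun_def)
  next
    case I: False
    show ?thesis
    proof (cases "I = L")
      case True
      have "0 \<le> S"
      proof (rule limit_nonneg[OF L])
        fix c :: real assume "0 < c" "c < 1"
        then show "L * ln (1 - c) \<le> S" using key[of "1-c"] True by simp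
      qed
      then show ?thesis using True L by (simp add: sfun_def)
    next
      case False
      have c: "0 < I / L" "I / L < 1" using I False I0 IL L by auto
      have "L * sfun (I / L) = I * ln (I/L) + (L - I) * ln (1 - I/L)"
        using L by (simp add: sfun_def field_simps)
      then show ?thesis using key[OF c] by simp
    qed
  qed
  then show ?thesis by (simp add: L_def I_def S_def)
qed

lemma int_leb:
  fixes G :: "real \<Rightarrow> real"
  assumes "G \<in> borel_measurable (lebesgue_on {-1..1})" "\<And>x. x \<in> {-1..1} \<Longrightarrow> \<bar>G x\<bar> \<le> K"
  shows "G integrable_on {-1..1}" "integral\<^sup>L (lebesgue_on {-1..1}) G = integral {-1..1} G"
proof -
  have a: "G absolutely_integrable_on {-1..1}"
    by (rule measurable_bounded_by_integrable_imp_absolutely_integrable[where g="\<lambda>_. K"])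
       (use assms in auto)
  then show "G integrable_on {-1..1}" using set_lebesgue_integral_eq_integral(1) by blast
  have "integrable (lebesgue_on {-1..1}) G"
    using a by (simp add: absolutely_integrable_imp_integrable)
  then show "integral\<^sup>L (lebesgue_on {-1..1}) G = integral {-1..1} G"
    by (simp add: lebesgue_integral_eq_integral)
qed

lemma borel_to_leb: "(f::real\<Rightarrow>real) \<in> borel_measurable borel \<Longrightarrow> f \<in> borel_measurable (lebesgue_on S)"
  by (simp add: measurable_completion measurable_restrict_space1)

lemma sfun_borel: "sfun \<in> borel_measurable borel"
  unfolding sfun_def by measurable

lemma sfun_bound: assumes "0 \<le> t" "t \<le> 1" shows "\<bar>sfun t\<bar> \<le> 1"
proof -
  have "(1/2) * ln (1/2) + (1 - 1/2) * ln (1 - 1/2) \<le> sfun t"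
    using sfun_tangent[of t "1/2"] assms by (simp add: algebra_simps)
  then have lo: "- ln 2 \<le> sfun t" by (simp add: ln_div)
  have "ln 2 \<le> (1::real)" using ln_le_minus_one[of 2] by simp
  moreover have "t * ln t \<le> 0"
    using assms by (cases "t = 0") (auto intro!: mult_nonneg_nonpos)
  moreover have "(1 - t) * ln (1 - t) \<le> 0"
    using assms by (cases "t = 1") (auto intro!: mult_nonneg_nonpos)
  ultimately show ?thesis using lo unfolding sfun_def by auto
qed

definition Bf :: "(real \<Rightarrow> real) \<Rightarrow> real \<Rightarrow> real" where
  "Bf \<rho> y = integral {-1..y} (\<lambda>x. 1 - \<rho> x)"

lemma Mset_facts:
  assumes "\<rho> \<in> Mset"
  shows "(\<lambda>x. 1 - \<rho> x) integrable_on {-1..1}"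
    and "(\<lambda>x. sfun (1 - \<rho> x)) integrable_on {-1..1}"
    and "SS \<rho> = - (1/2) * integral {-1..1} (\<lambda>x. sfun (1 - \<rho> x))"
    and "\<And>x. x \<in> {-1..1} \<Longrightarrow> 0 \<le> 1 - \<rho> x \<and> 1 - \<rho> x \<le> 1"
proof -
  have m: "\<rho> \<in> borel_measurable (lebesgue_on {-1..1})" and b: "\<And>x. x\<in>{-1..1} \<Longrightarrow> 0 \<le> \<rho> x \<and> \<rho> x \<le> 1"
    using assms by (auto simp: Mset_def)
  show "\<And>x. x \<in> {-1..1} \<Longrightarrow> 0 \<le> 1 - \<rho> x \<and> 1 - \<rho> x \<le> 1" using b by auto
  have m1: "(\<lambda>x. 1 - \<rho> x) \<in> borel_measurable (lebesgue_on {-1..1})" using m by measurable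
  show "(\<lambda>x. 1 - \<rho> x) integrable_on {-1..1}"
    by (rule int_leb(1)[OF m1, of 1]) (use b in auto)
  have m2: "(\<lambda>x. sfun (\<rho> x)) \<in> borel_measurable (lebesgue_on {-1..1})"
    using measurable_compose[OF m sfun_borel] by (simp add: o_def)
  have e: "(\<lambda>x. sfun (1 - \<rho> x)) = (\<lambda>x. sfun (\<rho> x))" using sfun_sym
    by (metis diff_diff_cancel)
  show "(\<lambda>x. sfun (1 - \<rho> x)) integrable_on {-1..1}" unfolding e
    by (rule int_leb(1)[OF m2, of 1]) (use b sfun_bound in auto)
  have "integral\<^sup>L (lebesgue_on {-1..1}) (\<lambda>x. sfun (\<rho> x)) = integral {-1..1} (\<lambda>x. sfun (\<rho> x))"
    by (rule int_leb(2)[OF m2, of 1]) (use b sfun_bound in auto)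
  then show "SS \<rho> = - (1/2) * integral {-1..1} (\<lambda>x. sfun (1 - \<rho> x))"
    unfolding e SS_def by simp
qed

lemma step_meas: "step_phi rm rp y \<in> borel_measurable (lebesgue_on S)"
proof -
  have "(\<lambda>x::real. if x < y then phi_of rm else phi_of rp) \<in> borel_measurable borel" by measurable
  then show ?thesis unfolding step_phi_def[abs_def] by (rule borel_to_leb)
qed

lemma lnexp_borel: "(\<lambda>t::real. ln (1 + exp t)) \<in> borel_measurable borel"
  by measurable

lemma Bf_facts:
  assumes "\<rho> \<in> Mset" "-1 \<le> y" "y \<le> 1"
  shows "(\<lambda>x. 1 - \<rho> x) integrable_on {-1..y}" "(\<lambda>x. 1 - \<rho> x) integrable_on {y..1}"
    "integral {y..1} (\<lambda>x. 1 - \<rho> x) = Bf \<rho> 1 - Bf \<rho> y"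
    "0 \<le> Bf \<rho> y" "Bf \<rho> y \<le> y + 1" "0 \<le> Bf \<rho> 1 - Bf \<rho> y" "Bf \<rho> 1 - Bf \<rho> y \<le> 1 - y"
proof -
  note f = Mset_facts[OF assms(1)]
  show i1: "(\<lambda>x. 1 - \<rho> x) integrable_on {-1..y}"
    by (rule integrable_subinterval_real[OF f(1)]) (use assms in auto)
  show i2: "(\<lambda>x. 1 - \<rho> x) integrable_on {y..1}"
    by (rule integrable_subinterval_real[OF f(1)]) (use assms in auto)
  show e: "integral {y..1} (\<lambda>x. 1 - \<rho> x) = Bf \<rho> 1 - Bf \<rho> y"
    using Henstock_Kurzweil_Integration.integral_combine[OF assms(2,3) f(1)] by (simp add: Bf_def)
  show "0 \<le> Bf \<rho> y" unfolding Bf_def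
    by (rule integral_nonneg[OF i1]) (use f(4) assms in auto)
  have "Bf \<rho> y \<le> integral {-1..y} (\<lambda>x. 1::real)" unfolding Bf_def
    by (rule integral_le[OF i1]) (use f(4) assms in auto)
  then show "Bf \<rho> y \<le> y + 1" using assms by simp
  have "0 \<le> integral {y..1} (\<lambda>x. 1 - \<rho> x)"
    by (rule integral_nonneg[OF i2]) (use f(4) assms in auto)
  then show "0 \<le> Bf \<rho> 1 - Bf \<rho> y" using e by simp
  have "integral {y..1} (\<lambda>x. 1 - \<rho> x) \<le> integral {y..1} (\<lambda>x. 1::real)"
    by (rule integral_le[OF i2]) (use f(4) assms in auto)
  then show "Bf \<rho> 1 - Bf \<rho> y \<le> 1 - y" using e assms by simp
qed

lemma HH_formula:
  assumes "\<rho> \<in> Mset" "-1 \<le> y" "y \<le> 1"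
  shows "HH \<rho> (step_phi rm rp y) = 1/2 * (phi_of rm * Bf \<rho> y + phi_of rp * (Bf \<rho> 1 - Bf \<rho> y)
            - ln (1 + exp (phi_of rm)) * (y + 1) - ln (1 + exp (phi_of rp)) * (1 - y))"
proof -
  define st where "st = step_phi rm rp y"
  define K where "K = (\<lambda>x. (1 - \<rho> x) * st x - ln (1 + exp (st x)))"
  define a where "a = phi_of rm"
  define b where "b = phi_of rp"
  have m: "\<rho> \<in> borel_measurable (lebesgue_on {-1..1})" and rb: "\<And>x. x\<in>{-1..1} \<Longrightarrow> 0 \<le> \<rho> x \<and> \<rho> x \<le> 1"
    using assms by (auto simp: Mset_def)
  have sm: "st \<in> borel_measurable (lebesgue_on {-1..1})" unfolding st_def by (rule step_meas)
  have lm: "(\<lambda>x. ln (1 + exp (st x))) \<in> borel_measurable (lebesgue_on {-1..1})"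
    using measurable_compose[OF sm lnexp_borel] by (simp add: o_def)
  have Km: "K \<in> borel_measurable (lebesgue_on {-1..1})" unfolding K_def
    using m sm lm by measurable
  have Kb: "\<bar>K x\<bar> \<le> \<bar>a\<bar> + \<bar>b\<bar> + ln (1 + exp a) + ln (1 + exp b)" if x: "x \<in> {-1..1}" for x
  proof -
    have st: "st x = a \<or> st x = b" by (simp add: st_def step_phi_def a_def b_def)
    have "\<bar>(1 - \<rho> x) * st x\<bar> \<le> \<bar>st x\<bar>" using rb[OF x]
      by (simp add: abs_mult mult_left_le_one_le)
    moreover have "0 \<le> ln (1 + exp t)" for t :: real by simp
    ultimately show ?thesis unfolding K_def using st
      by (smt (verit) abs_ge_zero)
  qed
  note KK = int_leb[OF Km Kb]
  have "HH \<rho> st = 1/2 * integral {-1..1} K" using KK(2) by (simp add: HH_def K_def)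
  also have "integral {-1..1} K = integral {-1..y} K + integral {y..1} K"
    using Henstock_Kurzweil_Integration.integral_combine[OF assms(2,3) KK(1)] by simp
  also have "integral {-1..y} K = integral {-1..y} (\<lambda>x. (1 - \<rho> x) * a - ln (1 + exp a))"
    by (rule integral_spike[where S="{y}"]) (auto simp: K_def st_def step_phi_def a_def)
  also have "\<dots> = a * Bf \<rho> y - ln (1 + exp a) * (y + 1)"
  proof -
    have "integral {-1..y} (\<lambda>x. (1 - \<rho> x) * a - ln (1 + exp a)) = integral {-1..y} (\<lambda>x. (1 - \<rho> x) * a) - integral {-1..y} (\<lambda>x. ln (1 + exp a))"
      by (rule integral_diff) (use Bf_facts(1)[OF assms] in \<open>auto intro: integrable_on_mult_left\<close>)
    then show ?thesis using assms by (simp add: Bf_def)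
  qed
  also have "integral {y..1} K = integral {y..1} (\<lambda>x. (1 - \<rho> x) * b - ln (1 + exp b))"
    by (rule integral_cong) (auto simp: K_def st_def step_phi_def b_def)
  also have "\<dots> = b * (Bf \<rho> 1 - Bf \<rho> y) - ln (1 + exp b) * (1 - y)"
  proof -
    have "integral {y..1} (\<lambda>x. (1 - \<rho> x) * b - ln (1 + exp b)) = integral {y..1} (\<lambda>x. (1 - \<rho> x) * b) - integral {y..1} (\<lambda>x. ln (1 + exp b))"
      by (rule integral_diff) (use Bf_facts(2)[OF assms] in \<open>auto intro: integrable_on_mult_left\<close>)
    then show ?thesis using assms Bf_facts(3)[OF assms] by simp
  qed
  finally show ?thesis by (simp add: st_def a_def b_def algebra_simps)
qed

lemma SS_upper:
  assumes "\<rho> \<in> Mset" "-1 \<le> y" "y \<le> 1"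
  shows "SS \<rho> \<le> - (1/2) * ((y + 1) * sfun (Bf \<rho> y / (y + 1)) + (1 - y) * sfun ((Bf \<rho> 1 - Bf \<rho> y) / (1 - y)))"
proof -
  note f = Mset_facts[OF assms(1)]
  have s1: "(\<lambda>x. sfun (1 - \<rho> x)) integrable_on {-1..y}"
    by (rule integrable_subinterval_real[OF f(2)]) (use assms in auto)
  have s2: "(\<lambda>x. sfun (1 - \<rho> x)) integrable_on {y..1}"
    by (rule integrable_subinterval_real[OF f(2)]) (use assms in auto)
  have j1: "(y - -1) * sfun (integral {-1..y} (\<lambda>x. 1 - \<rho> x) / (y - -1)) \<le> integral {-1..y} (\<lambda>x. sfun (1 - \<rho> x))"
    by (rule jensen[OF Bf_facts(1)[OF assms] s1]) (use f(4) assms in auto)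
  have j2: "(1 - y) * sfun (integral {y..1} (\<lambda>x. 1 - \<rho> x) / (1 - y)) \<le> integral {y..1} (\<lambda>x. sfun (1 - \<rho> x))"
    by (rule jensen[OF Bf_facts(2)[OF assms] s2]) (use f(4) assms in auto)
  have "integral {-1..1} (\<lambda>x. sfun (1 - \<rho> x)) = integral {-1..y} (\<lambda>x. sfun (1 - \<rho> x)) + integral {y..1} (\<lambda>x. sfun (1 - \<rho> x))"
    using Henstock_Kurzweil_Integration.integral_combine[OF assms(2,3) f(2)] by simp
  then show ?thesis using f(3) j1 j2 Bf_facts(3)[OF assms] by (simp add: Bf_def)
qed

lemma Bf_cont: assumes "\<rho> \<in> Mset" shows "continuous_on {-1..1} (Bf \<rho>)"
  unfolding Bf_def[abs_def] by (rule indefinite_integral_continuous_1[OF Mset_facts(1)[OF assms]])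

lemma Bf_m1: "Bf \<rho> (-1) = 0" by (simp add: Bf_def)

lemma lnexp_phi: assumes "0 < r" "r < 1" shows "ln (1 + exp (phi_of r)) = - ln (1 - r)"
proof -
  have "1 + exp (phi_of r) = 1 / (1 - r)" using assms by (simp add: phi_of_def field_simps)
  then show ?thesis using assms by (simp add: ln_div)
qed

lemma phi_eq: assumes "0 < r" "r < 1" shows "phi_of r = ln r - ln (1 - r)"
  using assms by (simp add: phi_of_def ln_div)

lemma params:
  assumes "0 < rm" "rm < rp" "rp < 1"
  shows "0 < phi_of rp - phi_of rm" "0 < xi0 rm rp" "xi0 rm rp < 1"
proof -
  have a: "ln rm < ln rp" using assms by simp
  have b: "ln (1 - rp) < ln (1 - rm)" using assms by simp
  have D: "phi_of rp - phi_of rm = (ln rp - ln rm) + (ln (1 - rm) - ln (1 - rp))"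
    using assms by (simp add: phi_eq)
  show "0 < phi_of rp - phi_of rm" using D a b by simp
  have x: "xi0 rm rp = (ln (1 - rm) - ln (1 - rp)) / ((ln rp - ln rm) + (ln (1 - rm) - ln (1 - rp)))"
    unfolding xi0_def D using assms by (simp add: lnexp_phi)
  show "0 < xi0 rm rp" unfolding x using a b by simp
  show "xi0 rm rp < 1" unfolding x using a b by simp
qed

lemma key_identity:
  assumes "phi_of rp - phi_of rm \<noteq> 0"
  shows "2 * (1/2 * (phi_of rm * B + phi_of rp * (n - B) - ln (1 + exp (phi_of rm)) * (y + 1) - ln (1 + exp (phi_of rp)) * (1 - y))) - 2 * (E + Vbar rm rp)
     = (phi_of rp - phi_of rm) * (y * xi0 rm rp + Em rm rp E n - B)"
proof -
  define D where "D = phi_of rp - phi_of rm"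
  have D: "D \<noteq> 0" using assms by (simp add: D_def)
  have e: "D * (y * xi0 rm rp + Em rm rp E n - B) = y * (D * xi0 rm rp) + (D * ((phi_of rp * n - 2 * Vbar rm rp - 2 * E) / D)) - D * xihat0 rm rp - D * B"
    unfolding Em_def D_def[symmetric] by (simp add: right_diff_distrib distrib_left mult.left_commute)
  also have "\<dots> = y * (ln (1 + exp (phi_of rp)) - ln (1 + exp (phi_of rm))) + (phi_of rp * n - 2 * Vbar rm rp - 2 * E)
       - (ln (1 + exp (phi_of rp)) + ln (1 + exp (phi_of rm))) - D * B"
  proof -
    have f1: "D * xi0 rm rp = ln (1 + exp (phi_of rp)) - ln (1 + exp (phi_of rm))"
      using D unfolding xi0_def D_def by simp
    have f2: "D * xihat0 rm rp = ln (1 + exp (phi_of rp)) + ln (1 + exp (phi_of rm))"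
      using D unfolding xihat0_def D_def by simp
    have f3: "D * ((phi_of rp * n - 2 * Vbar rm rp - 2 * E) / D) = phi_of rp * n - 2 * Vbar rm rp - 2 * E"
      using D by simp
    show ?thesis unfolding f1 f2 f3 by simp
  qed
  finally have X: "D * (y * xi0 rm rp + Em rm rp E n - B) = y * (ln (1 + exp (phi_of rp)) - ln (1 + exp (phi_of rm))) + (phi_of rp * n - 2 * Vbar rm rp - 2 * E)
       - (ln (1 + exp (phi_of rp)) + ln (1 + exp (phi_of rm))) - (phi_of rp - phi_of rm) * B" by (simp add: D_def algebra_simps)
  show ?thesis using X by (simp add: D_def algebra_simps)
qed

lemma Ffun_eq: "Ffun rm rp E y m = - (y + 1) * sfun ((y * xi0 rm rp + Em rm rp E m) / (y + 1))
   - (1 - y) * sfun ((m - (y * xi0 rm rp + Em rm rp E m)) / (1 - y))"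
  unfolding Ffun_def Let_def by (auto simp: algebra_simps)

lemma dir1:
  assumes pr: "0 < rm" "rm < rp" "rp < 1" and \<rho>: "\<rho> \<in> Mset" and eq: "Vplus rm rp \<rho> + SS \<rho> = E"
  shows "\<exists>p\<in>Dset rm rp E. SS \<rho> \<le> 1/2 * Ffun rm rp E (fst p) (snd p)"
proof -
  define Gf where "Gf y = 1/2 * (phi_of rm * Bf \<rho> y + phi_of rp * (Bf \<rho> 1 - Bf \<rho> y)
            - ln (1 + exp (phi_of rm)) * (y + 1) - ln (1 + exp (phi_of rp)) * (1 - y))" for y
  have Gc: "continuous_on {-1..1} Gf" unfolding Gf_def using Bf_cont[OF \<rho>]
    by (intro continuous_intros) auto
  obtain y0 where y0: "y0 \<in> {-1..1}" "\<And>y. y \<in> {-1..1} \<Longrightarrow> Gf y0 \<le> Gf y"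
    using continuous_attains_inf[OF compact_Icc _ Gc] by auto
  have HHG: "HH \<rho> (step_phi rm rp y) = Gf y" if "y \<in> {-1..1}" for y
    using HH_formula[OF \<rho>] that by (simp add: Gf_def)
  have Ph: "PhiSet rm rp = step_phi rm rp ` {-1..1}" by (auto simp: PhiSet_def)
  have "(\<lambda>\<phi>. HH \<rho> \<phi>) ` PhiSet rm rp = Gf ` {-1..1}"
    unfolding Ph image_image using HHG by (intro image_cong) auto
  then have "(INF \<phi>\<in>PhiSet rm rp. HH \<rho> \<phi>) = Inf (Gf ` {-1..1})" by simp
  also have "\<dots> = Gf y0" by (rule cInf_eq_minimum) (use y0 in auto)
  finally have G0: "Gf y0 = E + Vbar rm rp" using eq by (simp add: Vplus_def)
  define n where "n = Bf \<rho> 1"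
  define l where "l y = y * xi0 rm rp + Em rm rp E n" for y
  note P = params[OF pr]
  have idt: "2 * Gf y - 2 * (E + Vbar rm rp) = (phi_of rp - phi_of rm) * (l y - Bf \<rho> y)" for y
    using key_identity[of rp rm "Bf \<rho> y" n y E] P(1) unfolding Gf_def l_def n_def by simp
  have ge: "Bf \<rho> y \<le> l y" if y: "y \<in> {-1..1}" for y
  proof -
    have "0 \<le> (phi_of rp - phi_of rm) * (l y - Bf \<rho> y)" using idt[of y] y0(2)[OF y] G0 by simp
    then show ?thesis using P(1) by (simp add: zero_le_mult_iff)
  qed
  have eq0: "Bf \<rho> y0 = l y0" using idt[of y0] G0 P(1) by simp
  have yb: "-1 \<le> y0" "y0 \<le> 1" using y0(1) by auto
  note BF = Bf_facts[OF \<rho> yb]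
  note BF1 = Bf_facts[OF \<rho>, of 1, simplified]
  have n02: "0 \<le> n" "n \<le> 2" using BF1 by (auto simp: n_def)
  have c1: "xi0 rm rp \<le> Em rm rp E n" using ge[of "-1"] by (simp add: l_def Bf_m1)
  have c2: "n - xi0 rm rp \<le> Em rm rp E n" using ge[of 1] by (simp add: l_def n_def)
  have a1: "l y0 \<le> y0 + 1" "l y0 \<le> n" "0 \<le> l y0" "n - l y0 \<le> 1 - y0"
    using BF eq0 by (auto simp: n_def)
  have c3: "Em rm rp E n \<le> n - (n - 1) * xi0 rm rp"
  proof (cases "y0 \<le> n - 1")
    case True
    have "xi0 rm rp * (n - 1 - y0) \<le> n - 1 - y0" by (intro mult_left_le_one_le) (use True P in auto)
    then show ?thesis using a1 by (simp add: l_def algebra_simps)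
  next
    case False
    have "0 \<le> xi0 rm rp * (y0 - (n - 1))" using False P(2) by simp
    then show ?thesis using a1 by (simp add: l_def algebra_simps)
  qed
  have mem: "(y0, n) \<in> Dset rm rp E"
    unfolding Dset_def using yb n02 c1 c2 c3 a1 by (simp add: l_def)
  have "SS \<rho> \<le> 1/2 * Ffun rm rp E y0 n"
    using SS_upper[OF \<rho> yb] eq0 unfolding Ffun_eq by (simp add: l_def n_def algebra_simps)
  then show ?thesis using mem by force
qed

lemma dir2:
  assumes pr: "0 < rm" "rm < rp" "rp < 1" and mem: "(y, n) \<in> Dset rm rp E"
  shows "\<exists>\<rho>\<in>Mset. Vplus rm rp \<rho> + SS \<rho> = E \<and> SS \<rho> = 1/2 * Ffun rm rp E y n"
proof -
  note P = params[OF pr]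
  define \<xi> where "\<xi> = xi0 rm rp"
  define a where "a = y * \<xi> + Em rm rp E n"
  have yb: "-1 \<le> y" "y \<le> 1" and c1: "\<xi> \<le> Em rm rp E n" and c2: "n - \<xi> \<le> Em rm rp E n"
    and a1: "0 \<le> a" "a \<le> y + 1" "0 \<le> n - a" "n - a \<le> 1 - y"
    using mem by (auto simp: Dset_def a_def \<xi>_def)
  define \<alpha> where "\<alpha> = a / (y + 1)"
  define \<beta> where "\<beta> = (n - a) / (1 - y)"
  have \<alpha>01: "0 \<le> \<alpha>" "\<alpha> \<le> 1"
    using a1 yb by (auto simp: \<alpha>_def divide_le_eq_1)
  have \<beta>01: "0 \<le> \<beta>" "\<beta> \<le> 1"
    using a1 yb by (auto simp: \<beta>_def divide_le_eq_1)
  have \<alpha>a: "\<alpha> * (y + 1) = a"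
  proof (cases "y = -1")
    case True then show ?thesis using a1 by simp
  next
    case False then show ?thesis using yb by (simp add: \<alpha>_def)
  qed
  have \<beta>a: "\<beta> * (1 - y) = n - a"
  proof (cases "y = 1")
    case True then show ?thesis using a1 by simp
  next
    case False then show ?thesis using yb by (simp add: \<beta>_def)
  qed
  define h where "h x = (if x < y then \<alpha> else \<beta>)" for x :: real
  define \<rho> where "\<rho> x = 1 - h x" for x :: real
  have hb: "(\<lambda>x::real. 1 - (if x < y then \<alpha> else \<beta>)) \<in> borel_measurable borel" by measurable
  have \<rho>M: "\<rho> \<in> Mset"
    unfolding Mset_def using borel_to_leb[OF hb] \<alpha>01 \<beta>01
    by (auto simp: \<rho>_def[abs_def] h_def)
  have h\<rho>: "(\<lambda>x. 1 - \<rho> x) = h" by (simp add: \<rho>_def[abs_def])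
  have heq: "1 - \<rho> x = h x" for x by (simp add: \<rho>_def)
  have hi: "h integrable_on {-1..1}" using Mset_facts(1)[OF \<rho>M] h\<rho> by simp
  have Bl: "Bf \<rho> y' = \<alpha> * (y' + 1)" if "-1 \<le> y'" "y' \<le> y" for y'
  proof -
    have "Bf \<rho> y' = integral {-1..y'} h" by (simp add: Bf_def h\<rho>)
    also have "\<dots> = integral {-1..y'} (\<lambda>x. \<alpha>)"
      by (rule integral_spike[where S="{y}"]) (use that in \<open>auto simp: h_def\<close>)
    finally show ?thesis using that by simp
  qed
  have Br: "Bf \<rho> y' = a + \<beta> * (y' - y)" if "y \<le> y'" "y' \<le> 1" for y'
  proof -
    have hi': "h integrable_on {-1..y'}" by (rule integrable_subinterval_real[OF hi]) (use that yb in auto)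
    have "Bf \<rho> y' = integral {-1..y'} h" by (simp add: Bf_def h\<rho>)
    also have "\<dots> = integral {-1..y} h + integral {y..y'} h"
      using Henstock_Kurzweil_Integration.integral_combine[OF yb(1) that(1) hi'] by simp
    also have "integral {-1..y} h = a" using Bl[of y] yb \<alpha>a by (simp add: Bf_def h\<rho> algebra_simps)
    also have "integral {y..y'} h = integral {y..y'} (\<lambda>x. \<beta>)"
      by (rule integral_cong) (auto simp: h_def)
    finally show ?thesis using that by (simp add: algebra_simps)
  qed
  have Bn: "Bf \<rho> 1 = n" using Br[of 1] yb \<beta>a by simp
  define l where "l y' = y' * \<xi> + Em rm rp E n" for y'
  have ge: "Bf \<rho> y' \<le> l y'" if y': "-1 \<le> y'" "y' \<le> 1" for y'
  proof (cases "y' \<le> y")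
    case True
    have "0 \<le> (\<alpha> - \<xi>) * (y - y')"
    proof (cases "y = -1")
      case True then show ?thesis using \<open>y' \<le> y\<close> y' by simp
    next
      case False
      then have yp: "0 < y + 1" using yb by simp
      have "\<xi> * (y + 1) \<le> a" using c1 by (simp add: a_def algebra_simps)
      then have "\<xi> \<le> \<alpha>" using yp by (simp add: \<alpha>_def le_divide_eq)
      then show ?thesis using \<open>y' \<le> y\<close> by simp
    qed
    moreover have "l y' - Bf \<rho> y' = (\<alpha> - \<xi>) * (y - y')"
      using Bl[OF y'(1) True] \<alpha>a by (simp add: l_def a_def algebra_simps)
    ultimately show ?thesis by simp
  next
    case False
    have "0 \<le> (\<xi> - \<beta>) * (y' - y)"
    proof (cases "y = 1")
      case True then show ?thesis using False y' by simp
    next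
      case False
      then have yp: "0 < 1 - y" using yb by simp
      have "n - a \<le> \<xi> * (1 - y)" using c2 by (simp add: a_def algebra_simps)
      then have "\<beta> \<le> \<xi>" using yp by (simp add: \<beta>_def divide_le_eq)
      then show ?thesis using \<open>\<not> y' \<le> y\<close> by simp
    qed
    moreover have "l y' - Bf \<rho> y' = (\<xi> - \<beta>) * (y' - y)"
      using Br[of y'] False y' by (simp add: l_def a_def algebra_simps)
    ultimately show ?thesis by simp
  qed
  have eqy: "Bf \<rho> y = l y" using Bl[of y] yb \<alpha>a by (simp add: l_def a_def)
  define Gf where "Gf y' = 1/2 * (phi_of rm * Bf \<rho> y' + phi_of rp * (Bf \<rho> 1 - Bf \<rho> y')
            - ln (1 + exp (phi_of rm)) * (y' + 1) - ln (1 + exp (phi_of rp)) * (1 - y'))" for y'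
  have idt: "2 * Gf y' - 2 * (E + Vbar rm rp) = (phi_of rp - phi_of rm) * (l y' - Bf \<rho> y')" for y'
    using key_identity[of rp rm "Bf \<rho> y'" n y' E] P(1) unfolding Gf_def l_def Bn \<xi>_def by simp
  have Gy: "Gf y = E + Vbar rm rp" using idt[of y] eqy by simp
  have Gge: "Gf y \<le> Gf y'" if "y' \<in> {-1..1}" for y'
  proof -
    have "0 \<le> (phi_of rp - phi_of rm) * (l y' - Bf \<rho> y')" using ge[of y'] that P(1) by simp
    then show ?thesis using idt[of y'] Gy by simp
  qed
  have HHG: "HH \<rho> (step_phi rm rp y') = Gf y'" if "y' \<in> {-1..1}" for y'
    using HH_formula[OF \<rho>M] that by (simp add: Gf_def)
  have Ph: "PhiSet rm rp = step_phi rm rp ` {-1..1}" by (auto simp: PhiSet_def)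
  have "(\<lambda>\<phi>. HH \<rho> \<phi>) ` PhiSet rm rp = Gf ` {-1..1}"
    unfolding Ph image_image using HHG by (intro image_cong) auto
  then have "(INF \<phi>\<in>PhiSet rm rp. HH \<rho> \<phi>) = Inf (Gf ` {-1..1})" by simp
  also have "\<dots> = Gf y" by (rule cInf_eq_minimum) (use yb Gge in auto)
  finally have V: "Vplus rm rp \<rho> + SS \<rho> = E" using Gy by (simp add: Vplus_def)
  have si: "(\<lambda>x. sfun (h x)) integrable_on {-1..1}" using Mset_facts(2)[OF \<rho>M] by (simp add: heq)
  have "integral {-1..1} (\<lambda>x. sfun (h x)) = integral {-1..y} (\<lambda>x. sfun (h x)) + integral {y..1} (\<lambda>x. sfun (h x))"
    using Henstock_Kurzweil_Integration.integral_combine[OF yb si] by simp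
  also have "integral {-1..y} (\<lambda>x. sfun (h x)) = integral {-1..y} (\<lambda>x. sfun \<alpha>)"
    by (rule integral_spike[where S="{y}"]) (auto simp: h_def)
  also have "integral {y..1} (\<lambda>x. sfun (h x)) = integral {y..1} (\<lambda>x. sfun \<beta>)"
    by (rule integral_cong) (auto simp: h_def)
  finally have SI: "integral {-1..1} (\<lambda>x. sfun (h x)) = (y + 1) * sfun \<alpha> + (1 - y) * sfun \<beta>"
    using yb by simp
  have S: "SS \<rho> = 1/2 * Ffun rm rp E y n"
    using Mset_facts(3)[OF \<rho>M] SI unfolding Ffun_eq heq
    by (simp add: \<alpha>_def \<beta>_def a_def \<xi>_def algebra_simps)
  show ?thesis using \<rho>M V S by blast
qed

theorem proposition4p1:
  fixes rm rp E :: real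
  assumes "0 < rm" and "rm < rp" and "rp < 1" and "0 \<le> E"
  shows "Splus rm rp E = ereal (1/2) * (SUP p\<in>Dset rm rp E. ereal (Ffun rm rp E (fst p) (snd p)))"
proof -
  define X where "X = {SS \<rho> | \<rho>. \<rho> \<in> Mset \<and> Vplus rm rp \<rho> + SS \<rho> = E}"
  define F where "F p = Ffun rm rp E (fst p) (snd p)" for p
  have S: "Splus rm rp E = Sup (ereal ` X)" by (simp add: Splus_def X_def)
  have d1: "\<exists>p\<in>Dset rm rp E. x \<le> 1/2 * F p" if "x \<in> X" for x
    using that dir1[OF assms(1-3)] unfolding X_def F_def by blast
  have d2: "1/2 * F p \<in> X" if "p \<in> Dset rm rp E" for p
    using that dir2[OF assms(1-3), of "fst p" "snd p"] unfolding X_def F_def by force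
  show ?thesis
  proof (cases "Dset rm rp E = {}")
    case True
    then have "X = {}" using d1 by blast
    then show ?thesis using True S by (simp add: bot_ereal_def)
  next
    case False
    have "ereal (1/2) * (SUP p\<in>Dset rm rp E. ereal (F p)) = (SUP p\<in>Dset rm rp E. ereal (1/2) * ereal (F p))"
      by (rule Sup_ereal_mult_left') (use False in auto)
    also have "\<dots> = (SUP p\<in>Dset rm rp E. ereal (1/2 * F p))" by simp
    also have "\<dots> = Sup (ereal ` X)"
    proof (rule antisym)
      show "(SUP p\<in>Dset rm rp E. ereal (1/2 * F p)) \<le> Sup (ereal ` X)"
        by (rule SUP_least) (use d2 in \<open>auto intro: Sup_upper\<close>)
      show "Sup (ereal ` X) \<le> (SUP p\<in>Dset rm rp E. ereal (1/2 * F p))"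
      proof (rule Sup_least)
        fix z assume "z \<in> ereal ` X"
        then obtain x where x: "x \<in> X" "z = ereal x" by auto
        obtain p where p: "p \<in> Dset rm rp E" "x \<le> 1/2 * F p" using d1[OF x(1)] by blast
        show "z \<le> (SUP p\<in>Dset rm rp E. ereal (1/2 * F p))"
          using p x(2) by (intro SUP_upper2[OF p(1)]) simp
      qed
    qed
    finally show ?thesis using S by (simp add: F_def)
  qed
qed

end
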